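(* In the public goods model with $k\ge n$, for any $\alpha\in(0,1]$, any allocation that is $\alpha$-RRS is also $\alpha\cdot\frac{n}{2n-1}$-Prop. Further, when $n$ divides $k$, any $\alpha$-RRS allocation is $\alpha$-Prop.
   Context: Public goods model: agents $[n]$, goods $G=[m]$, integer $0\le k\le m$, nonnegative integer additive values $v_{ij}$, $v_i(S)=\sum_{j\in S}v_{ij}$; an allocation is $x\subseteq G$ with $|x|\le k$. $\mathrm{Prop}_i=\frac1n\max_{|y|\le k}v_i(y)$, $\mathrm{RRS}_i=\max_{|y|\le\lfloor k/n\rfloor}v_i(y)$. $x$ is $\beta$-RRS if $v_i(x)\ge\beta\,\mathrm{RRS}_i$ for all $i$, and $\beta$-Prop if $v_i(x)\ge\beta\,\mathrm{Prop}_i$ for all $i$. *)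

theory Defs
  imports "HOL-Analysis.Analysis"
begin

definition val :: "(nat \<Rightarrow> nat \<Rightarrow> nat) \<Rightarrow> nat \<Rightarrow> nat set \<Rightarrow> real" where
  "val v i S = real (\<Sum>j\<in>S. v i j)"

definition maxval :: "(nat \<Rightarrow> nat \<Rightarrow> nat) \<Rightarrow> nat \<Rightarrow> nat \<Rightarrow> nat \<Rightarrow> real" where
  "maxval v m i t = Max {val v i y | y. y \<subseteq> {..<m} \<and> card y \<le> t}"

definition Prop_share :: "(nat \<Rightarrow> nat \<Rightarrow> nat) \<Rightarrow> nat \<Rightarrow> nat \<Rightarrow> nat \<Rightarrow> nat \<Rightarrow> real" where
  "Prop_share v n m k i = maxval v m i k / real n"

definition RRS :: "(nat \<Rightarrow> nat \<Rightarrow> nat) \<Rightarrow> nat \<Rightarrow> nat \<Rightarrow> nat \<Rightarrow> nat \<Rightarrow> real" where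
  "RRS v n m k i = maxval v m i (k div n)"

definition is_allocation :: "nat \<Rightarrow> nat \<Rightarrow> nat set \<Rightarrow> bool" where
  "is_allocation m k x \<longleftrightarrow> x \<subseteq> {..<m} \<and> card x \<le> k"

definition beta_RRS :: "(nat \<Rightarrow> nat \<Rightarrow> nat) \<Rightarrow> nat \<Rightarrow> nat \<Rightarrow> nat \<Rightarrow> real \<Rightarrow> nat set \<Rightarrow> bool" where
  "beta_RRS v n m k \<beta> x \<longleftrightarrow> (\<forall>i<n. val v i x \<ge> \<beta> * RRS v n m k i)"

definition beta_Prop :: "(nat \<Rightarrow> nat \<Rightarrow> nat) \<Rightarrow> nat \<Rightarrow> nat \<Rightarrow> nat \<Rightarrow> real \<Rightarrow> nat set \<Rightarrow> bool" where
  "beta_Prop v n m k \<beta> x \<longleftrightarrow> (\<forall>i<n. val v i x \<ge> \<beta> * Prop_share v n m k i)"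

end

theory Submission
  imports Defs
begin

lemma maxval_fin: "finite {val v i y | y. y \<subseteq> {..<m} \<and> card y \<le> t}"
proof -
  have "{val v i y | y. y \<subseteq> {..<m} \<and> card y \<le> t} \<subseteq> (val v i) ` Pow {..<m}" by auto
  thus ?thesis by (rule finite_subset) auto
qed

lemma maxval_ge: "z \<subseteq> {..<m} \<Longrightarrow> card z \<le> t \<Longrightarrow> val v i z \<le> maxval v m i t"
  unfolding maxval_def by (rule Max_ge[OF maxval_fin]) auto

lemma maxval_nonneg: "0 \<le> maxval v m i t"
proof -
  have "val v i {} \<le> maxval v m i t" by (rule maxval_ge) auto
  thus ?thesis by (simp add: val_def)
qed

lemma maxval_attained: "\<exists>y. y \<subseteq> {..<m} \<and> card y \<le> t \<and> maxval v m i t = val v i y"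
proof -
  have ne: "{val v i y | y. y \<subseteq> {..<m} \<and> card y \<le> t} \<noteq> {}" by auto
  have "maxval v m i t \<in> {val v i y | y. y \<subseteq> {..<m} \<and> card y \<le> t}"
    unfolding maxval_def by (rule Max_in[OF maxval_fin ne])
  thus ?thesis by auto
qed

lemma split_bound:
  "y \<subseteq> {..<m} \<Longrightarrow> card y \<le> p * q \<Longrightarrow> val v i y \<le> real p * maxval v m i q"
proof (induction p arbitrary: y)
  case 0
  have "finite y" using finite_subset[OF "0.prems"(1)] by simp
  then have "y = {}" using 0 by simp
  then show ?case by (simp add: val_def)
next
  case (Suc p)
  have fin: "finite y" using finite_subset[OF Suc.prems(1)] by simp
  show ?case
  proof (cases "card y \<le> q")
    case True
    have "val v i y \<le> maxval v m i q" using maxval_ge Suc True by blast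
    also have "\<dots> \<le> real (Suc p) * maxval v m i q"
      using maxval_nonneg[of v m i q] by (simp add: algebra_simps)
    finally show ?thesis .
  next
    case False
    have "q \<le> card y" using False by simp
    then obtain z where z: "z \<subseteq> y" "card z = q" and fz: "finite z"
      by (rule obtain_subset_with_card_n)
    have "val v i y = val v i z + val v i (y - z)"
      unfolding val_def using sum.subset_diff[OF z(1) fin, of "v i"] by simp
    moreover have "val v i z \<le> maxval v m i q"
      using z(1) Suc.prems(1) z(2) by (intro maxval_ge) auto
    moreover have "val v i (y - z) \<le> real p * maxval v m i q"
    proof (rule Suc.IH)
      show "y - z \<subseteq> {..<m}" using Suc.prems by blast
      have "card (y - z) = card y - q" using card_Diff_subset[OF fz z(1)] z by simp
      thus "card (y - z) \<le> p * q" using Suc.prems by simp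
    qed
    ultimately show ?thesis by (simp add: algebra_simps)
  qed
qed

lemma prop_bound:
  assumes "p * (k div n) \<ge> k"
  shows "maxval v m i k \<le> real p * maxval v m i (k div n)"
proof -
  obtain y where y: "y \<subseteq> {..<m}" "card y \<le> k" "maxval v m i k = val v i y"
    using maxval_attained by blast
  have c: "card y \<le> p * (k div n)" using y assms by linarith
  show ?thesis using split_bound[OF y(1) c, of v i] y(3) by simp
qed

theorem lemma2:
  fixes v :: "nat \<Rightarrow> nat \<Rightarrow> nat" and n m k :: nat and \<alpha> :: real and x :: "nat set"
  assumes "n \<ge> 1" and "k \<le> m" and "n \<le> k"
    and "0 < \<alpha>" and "\<alpha> \<le> 1"
    and "is_allocation m k x"
    and "beta_RRS v n m k \<alpha> x"
  shows "beta_Prop v n m k (\<alpha> * (real n / (2 * real n - 1))) x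
       \<and> (n dvd k \<longrightarrow> beta_Prop v n m k \<alpha> x)"
proof -
  define q where "q = k div n"
  have q1: "q \<ge> 1" using assms(1,3) unfolding q_def
    using div_le_mono[OF assms(3), of n] assms(1) by simp
  have kq: "k = n * q + k mod n" unfolding q_def by simp
  have "k mod n < n" using assms(1) by simp
  have "(2 * n - 1) * q = n * q + (n - 1) * q" using assms(1)
    by (simp add: algebra_simps diff_mult_distrib)
  moreover have "(n - 1) * q \<ge> n - 1" using q1 by simp
  ultimately have A: "(2 * n - 1) * (k div n) \<ge> k" unfolding q_def[symmetric]
    using kq \<open>k mod n < n\<close> by linarith
  have n2: "real (2 * n - 1) = 2 * real n - 1" using assms(1) by (simp add: of_nat_diff)
  have pos: "2 * real n - 1 > 0" using assms(1) by simp
  have P1: "beta_Prop v n m k (\<alpha> * (real n / (2 * real n - 1))) x"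
    unfolding beta_Prop_def
  proof (intro allI impI)
    fix i assume i: "i < n"
    have r: "val v i x \<ge> \<alpha> * maxval v m i (k div n)"
      using assms(7) i unfolding beta_RRS_def RRS_def by blast
    have b: "maxval v m i k \<le> (2 * real n - 1) * maxval v m i (k div n)"
      using prop_bound[OF A, of v m i] n2 by simp
    have "\<alpha> * (real n / (2 * real n - 1)) * Prop_share v n m k i
        = \<alpha> * (maxval v m i k / (2 * real n - 1))"
      unfolding Prop_share_def using assms(1) by (simp add: field_simps)
    also have "\<dots> \<le> \<alpha> * maxval v m i (k div n)"
      using b pos assms(4) by (simp add: divide_le_eq mult.commute)
    finally show "\<alpha> * (real n / (2 * real n - 1)) * Prop_share v n m k i \<le> val v i x"
      using r by linarith
  qed
  have P2: "beta_Prop v n m k \<alpha> x" if d: "n dvd k"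
    unfolding beta_Prop_def
  proof (intro allI impI)
    fix i assume i: "i < n"
    have r: "val v i x \<ge> \<alpha> * maxval v m i (k div n)"
      using assms(7) i unfolding beta_RRS_def RRS_def by blast
    have "n * (k div n) \<ge> k" using d by simp
    then have b: "maxval v m i k \<le> real n * maxval v m i (k div n)"
      using prop_bound by blast
    have "\<alpha> * Prop_share v n m k i = \<alpha> * (maxval v m i k / real n)"
      unfolding Prop_share_def by simp
    also have "\<dots> \<le> \<alpha> * maxval v m i (k div n)"
      using b assms(1,4) by (simp add: divide_le_eq mult.commute)
    finally show "\<alpha> * Prop_share v n m k i \<le> val v i x" using r by linarith
  qed
  show ?thesis using P1 P2 by blast
qed

end
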